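(* Let $\mathcal{L}_1=\langle c_1,G_1\rangle$ and $\mathcal{L}_2=\langle c_2,G_2\rangle$ be logical zonotopes in $\mathbb{B}^n$. Let $\tilde c_1=c_1\oplus\mathbf{1}$, $\tilde c_2=c_2\oplus\mathbf{1}$, and $$\tilde G=[\tilde c_1g_{2,1},\dots,\tilde c_1g_{2,\gamma_2},\tilde c_2g_{1,1},\dots,\tilde c_2g_{1,\gamma_1},g_{1,1}g_{2,1},\dots,g_{1,\gamma_1}g_{2,\gamma_2}]$$ (last block over all pairs $(i,j)$). Then the Minkowski OR satisfies $\{z_1\vee z_2: z_1\in\mathcal{L}_1,z_2\in\mathcal{L}_2\}\subseteq\langle \tilde c_1\tilde c_2\oplus\mathbf{1},\tilde G\rangle$, and the Minkowski NOR satisfies $\{\neg(z_1\vee z_2): z_1\in\mathcal{L}_1,z_2\in\mathcal{L}_2\}\subseteq\langle \tilde c_1\tilde c_2,\tilde G\rangle$.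
   Context: $\mathbb{B}=\{0,1\}$; $\mathbf{1}$ is the all-ones vector. For binary vectors, $\oplus$ denotes componentwise XOR, $\neg$ componentwise negation, $\vee$ componentwise OR, and juxtaposition $ab$ componentwise AND; for $g\in\mathbb{B}^n$, $\beta\in\mathbb{B}$, $g\beta$ is $g$ if $\beta=1$ and $0$ otherwise. A logical zonotope is $\langle c,G\rangle=\{x\in\mathbb{B}^n: x=c\oplus g_1\beta_1\oplus\cdots\oplus g_\gamma\beta_\gamma,\ \beta_i\in\{0,1\}\}$ for $c\in\mathbb{B}^n$, $G=[g_1,\dots,g_\gamma]\in\mathbb{B}^{n\times\gamma}$; $G_1=[g_{1,1},\dots,g_{1,\gamma_1}]$, $G_2=[g_{2,1},\dots,g_{2,\gamma_2}]$. *)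

theory Defs
  imports "HOL-Analysis.Analysis"
begin

text \<open>Binary vectors in B^n are modelled as bool ^ 'n (index type 'n, n = CARD('n)).
  Componentwise XOR, AND, OR, negation; all-ones vector.\<close>

definition bxor :: "bool ^ 'n \<Rightarrow> bool ^ 'n \<Rightarrow> bool ^ 'n" where
  "bxor a b = (\<chi> i. a $ i \<noteq> b $ i)"

definition band :: "bool ^ 'n \<Rightarrow> bool ^ 'n \<Rightarrow> bool ^ 'n" where
  "band a b = (\<chi> i. a $ i \<and> b $ i)"

definition bor :: "bool ^ 'n \<Rightarrow> bool ^ 'n \<Rightarrow> bool ^ 'n" where
  "bor a b = (\<chi> i. a $ i \<or> b $ i)"

definition bnot :: "bool ^ 'n \<Rightarrow> bool ^ 'n" where
  "bnot a = (\<chi> i. \<not> a $ i)"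

definition bones :: "bool ^ 'n" where
  "bones = (\<chi> i. True)"

definition bzero :: "bool ^ 'n" where
  "bzero = (\<chi> i. False)"

definition bscale :: "bool ^ 'n \<Rightarrow> bool \<Rightarrow> bool ^ 'n" where
  "bscale g \<beta> = (if \<beta> then g else bzero)"

text \<open>Logical zonotope <c, G>, with generator matrix G given as the list of its columns
  [g_1,...,g_gamma]: all c XOR g_1 beta_1 XOR ... XOR g_gamma beta_gamma.\<close>
definition logical_zonotope :: "bool ^ 'n \<Rightarrow> (bool ^ 'n) list \<Rightarrow> (bool ^ 'n) set" where
  "logical_zonotope c G =
     {x. \<exists>\<beta> :: bool list. length \<beta> = length G \<and>
          x = foldl bxor c (map2 bscale G \<beta>)}"

definition or_generators :: "bool ^ 'n \<Rightarrow> (bool ^ 'n) list \<Rightarrow> bool ^ 'n \<Rightarrow> (bool ^ 'n) list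
    \<Rightarrow> (bool ^ 'n) list" where
  "or_generators c1 G1 c2 G2 =
     (let c1' = bxor c1 bones; c2' = bxor c2 bones in
      map (band c1') G2 @ map (band c2') G1 @ [band g1 g2. g1 \<leftarrow> G1, g2 \<leftarrow> G2])"

end

theory Submission
  imports Defs
begin

definition S :: "(bool ^ 'n) list \<Rightarrow> bool ^ 'n" where
  "S xs = foldl bxor bzero xs"

lemma bx_assoc: "bxor (bxor a b) c = bxor a (bxor b c)"
  by (auto simp: bxor_def vec_eq_iff)
lemma bx_comm: "bxor a b = bxor b a"
  by (auto simp: bxor_def vec_eq_iff)
lemma bx_zero[simp]: "bxor a bzero = a" "bxor bzero a = a"
  by (auto simp: bxor_def bzero_def vec_eq_iff)

lemma foldl_bx: "foldl bxor c xs = bxor c (S xs)"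
proof (induction xs arbitrary: c)
  case Nil then show ?case by (simp add: S_def)
next
  case (Cons x xs)
  have "foldl bxor c (x#xs) = bxor (bxor c x) (S xs)" using Cons by simp
  moreover have "S (x#xs) = bxor x (S xs)" using Cons[of "bxor bzero x"] by (simp add: S_def)
  ultimately show ?case by (simp add: bx_assoc)
qed

lemma S_Nil[simp]: "S [] = bzero" by (simp add: S_def)
lemma S_Cons[simp]: "S (x#xs) = bxor x (S xs)"
proof -
  have "S (x#xs) = foldl bxor (bxor bzero x) xs" by (simp add: S_def)
  also have "\<dots> = bxor x (S xs)" by (simp only: foldl_bx bx_zero)
  finally show ?thesis .
qed
lemma S_app[simp]: "S (xs@ys) = bxor (S xs) (S ys)"
  by (induction xs) (auto simp: bx_assoc)

lemma band_S: "band v (S xs) = S (map (band v) xs)"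
  by (induction xs) (auto simp: band_def bxor_def bzero_def vec_eq_iff)

lemma band_bscale: "band v (bscale g b) = bscale (band v g) b"
  by (auto simp: band_def bscale_def bzero_def vec_eq_iff)

lemma bscale_band: "band (bscale g a) (bscale h b) = bscale (band g h) (a \<and> b)"
  by (auto simp: band_def bscale_def bzero_def vec_eq_iff)

lemma map2_map_band: "map2 bscale (map (band v) G) \<beta> = map (band v) (map2 bscale G \<beta>)"
  by (induction G arbitrary: \<beta>; case_tac \<beta>; simp add: band_bscale)

lemma prod_lemma:
  assumes "length \<beta>1 = length G1" "length \<beta>2 = length G2"
  shows "band (S (map2 bscale G1 \<beta>1)) (S (map2 bscale G2 \<beta>2)) =
     S (map2 bscale [band g1 g2. g1 \<leftarrow> G1, g2 \<leftarrow> G2] [a \<and> b. a \<leftarrow> \<beta>1, b \<leftarrow> \<beta>2])"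
  using assms(1)
proof (induction \<beta>1 G1 rule: list_induct2)
  case Nil then show ?case by (simp add: band_def bzero_def vec_eq_iff)
next
  case (Cons a \<beta>1 g G1)
  have e: "map2 bscale (map (band g) G2) (map ((\<and>) a) \<beta>2) =
        map (band (bscale g a)) (map2 bscale G2 \<beta>2)"
    using assms(2)[symmetric]
    by (induction G2 \<beta>2 rule: list_induct2) (auto simp: bscale_band)
  have l: "length (map (band g) G2) = length (map ((\<and>) a) \<beta>2)" using assms(2) by simp
  have d: "band (bxor x y) z = bxor (band x z) (band y z)" for x y z :: "bool ^ 'a"
    by (auto simp: band_def bxor_def vec_eq_iff)
  have c: "band x y = band y x" for x y :: "bool ^ 'a" by (auto simp: band_def vec_eq_iff)
  have "band (S (map2 bscale (g#G1) (a#\<beta>1))) (S (map2 bscale G2 \<beta>2))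
     = bxor (band (bscale g a) (S (map2 bscale G2 \<beta>2))) (band (S (map2 bscale G1 \<beta>1)) (S (map2 bscale G2 \<beta>2)))"
    by (simp add: d)
  also have "band (bscale g a) (S (map2 bscale G2 \<beta>2)) = S (map2 bscale (map (band g) G2) (map ((\<and>) a) \<beta>2))"
    unfolding e by (simp add: band_S del: map_map)
  also have "bxor (S (map2 bscale (map (band g) G2) (map ((\<and>) a) \<beta>2))) (band (S (map2 bscale G1 \<beta>1)) (S (map2 bscale G2 \<beta>2)))
     = S (map2 bscale (map (band g) G2) (map ((\<and>) a) \<beta>2) @ map2 bscale [band g1 g2. g1 \<leftarrow> G1, g2 \<leftarrow> G2] [a \<and> b. a \<leftarrow> \<beta>1, b \<leftarrow> \<beta>2])"
    by (simp only: Cons.IH S_app)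
  also have "map2 bscale (map (band g) G2) (map ((\<and>) a) \<beta>2) @ map2 bscale [band g1 g2. g1 \<leftarrow> G1, g2 \<leftarrow> G2] [a \<and> b. a \<leftarrow> \<beta>1, b \<leftarrow> \<beta>2]
     = map2 bscale [band g1 g2. g1 \<leftarrow> g#G1, g2 \<leftarrow> G2] [a \<and> b. a \<leftarrow> a#\<beta>1, b \<leftarrow> \<beta>2]"
    using l by (simp only: concat.simps list.map zip_append map_append)
  finally show ?case .
qed

lemma S_map2_app: "length b1 = length G1 \<Longrightarrow>
   map2 bscale (G1 @ G2) (b1 @ b2) = map2 bscale G1 b1 @ map2 bscale G2 b2"
  by (simp add: zip_append)

lemma bnot_lem: "band (bnot (bxor c X)) (bnot (bxor d Y)) = band (bxor (bxor c bones) X) (bxor (bxor d bones) Y)"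
  by (simp add: vec_eq_iff bnot_def band_def bxor_def bones_def)

lemma expand_lem: "band (bxor a x) (bxor b y) = bxor (band a b) (bxor (band a y) (bxor (band b x) (band x y)))"
  by (simp add: vec_eq_iff band_def bxor_def) blast

lemma core:
  assumes z1: "z1 \<in> logical_zonotope c1 G1" and z2: "z2 \<in> logical_zonotope c2 G2"
  shows "\<exists>\<beta>. length \<beta> = length (or_generators c1 G1 c2 G2) \<and>
     band (bnot z1) (bnot z2) = bxor (band (bxor c1 bones) (bxor c2 bones))
         (S (map2 bscale (or_generators c1 G1 c2 G2) \<beta>))"
proof -
  obtain b1 where b1: "length b1 = length G1" "z1 = bxor c1 (S (map2 bscale G1 b1))"
    using z1 by (auto simp: logical_zonotope_def foldl_bx)
  obtain b2 where b2: "length b2 = length G2" "z2 = bxor c2 (S (map2 bscale G2 b2))"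
    using z2 by (auto simp: logical_zonotope_def foldl_bx)
  define X1 where "X1 = S (map2 bscale G1 b1)"
  define X2 where "X2 = S (map2 bscale G2 b2)"
  define c1' where "c1' = bxor c1 (bones :: bool ^ 'a)"
  define c2' where "c2' = bxor c2 (bones :: bool ^ 'a)"
  define \<beta> where "\<beta> = b2 @ b1 @ [a \<and> b. a \<leftarrow> b1, b \<leftarrow> b2]"
  have len: "length [a \<and> b. a \<leftarrow> b1, b \<leftarrow> b2] = length [band g1 g2. g1 \<leftarrow> G1, g2 \<leftarrow> G2]"
    using b1(1) b2(1)
    by (simp add: length_concat comp_def sum_list_triv map_replicate_const)
  have L: "length \<beta> = length (or_generators c1 G1 c2 G2)"
    using len b1(1) b2(1) by (simp add: \<beta>_def or_generators_def Let_def)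
  have M: "map2 bscale (or_generators c1 G1 c2 G2) \<beta> =
     map (band c1') (map2 bscale G2 b2) @ map (band c2') (map2 bscale G1 b1) @
     map2 bscale [band g1 g2. g1 \<leftarrow> G1, g2 \<leftarrow> G2] [a \<and> b. a \<leftarrow> b1, b \<leftarrow> b2]"
    using b1(1) b2(1)
    by (simp add: or_generators_def Let_def \<beta>_def zip_append map2_map_band[symmetric] c1'_def c2'_def del: map_map)
  have P: "band X1 X2 = S (map2 bscale [band g1 g2. g1 \<leftarrow> G1, g2 \<leftarrow> G2] [a \<and> b. a \<leftarrow> b1, b \<leftarrow> b2])"
    unfolding X1_def X2_def using prod_lemma b1(1) b2(1) by blast
  have "band (bnot z1) (bnot z2) = band (bxor c1' X1) (bxor c2' X2)"
    unfolding b1(2) b2(2) X1_def[symmetric] X2_def[symmetric] c1'_def c2'_def by (rule bnot_lem)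
  also have "\<dots> = bxor (band c1' c2') (bxor (band c1' X2) (bxor (band c2' X1) (band X1 X2)))"
    by (rule expand_lem)
  also have "\<dots> = bxor (band c1' c2') (S (map2 bscale (or_generators c1 G1 c2 G2) \<beta>))"
  proof -
    have A: "S (map (band c1') (map2 bscale G2 b2)) = band c1' X2"
      by (simp add: band_S X2_def del: map_map)
    have B: "S (map (band c2') (map2 bscale G1 b1)) = band c2' X1"
      by (simp add: band_S X1_def del: map_map)
    show ?thesis by (simp only: M S_app A B P)
  qed
  finally have F: "band (bnot z1) (bnot z2) = bxor (band c1' c2') (S (map2 bscale (or_generators c1 G1 c2 G2) \<beta>))" .
  show ?thesis
    apply (rule exI[where x=\<beta>])
    apply (rule conjI[OF L])
    using F unfolding c1'_def c2'_def .
qed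

theorem mainTheorem5:
  fixes c1 c2 :: "bool ^ 'n" and G1 G2 :: "(bool ^ 'n) list"
  defines "c1' \<equiv> bxor c1 bones" and "c2' \<equiv> bxor c2 bones"
  shows "{bor z1 z2 | z1 z2. z1 \<in> logical_zonotope c1 G1 \<and> z2 \<in> logical_zonotope c2 G2}
           \<subseteq> logical_zonotope (bxor (band c1' c2') bones) (or_generators c1 G1 c2 G2)
         \<and> {bnot (bor z1 z2) | z1 z2. z1 \<in> logical_zonotope c1 G1 \<and> z2 \<in> logical_zonotope c2 G2}
           \<subseteq> logical_zonotope (band c1' c2') (or_generators c1 G1 c2 G2)"
proof (intro conjI subsetI)
  fix x assume "x \<in> {bor z1 z2 | z1 z2. z1 \<in> logical_zonotope c1 G1 \<and> z2 \<in> logical_zonotope c2 G2}"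
  then obtain z1 z2 where z: "z1 \<in> logical_zonotope c1 G1" "z2 \<in> logical_zonotope c2 G2" "x = bor z1 z2"
    by blast
  obtain \<beta> where \<beta>: "length \<beta> = length (or_generators c1 G1 c2 G2)"
    "band (bnot z1) (bnot z2) = bxor (band c1' c2') (S (map2 bscale (or_generators c1 G1 c2 G2) \<beta>))"
    using core[OF z(1,2)] unfolding c1'_def c2'_def by blast
  have "x = bxor (band (bnot z1) (bnot z2)) bones"
    using z(3) by (auto simp: vec_eq_iff bor_def bxor_def band_def bnot_def bones_def)
  also have "\<dots> = bxor (bxor (band c1' c2') bones) (S (map2 bscale (or_generators c1 G1 c2 G2) \<beta>))"
    using \<beta>(2) by (metis bx_assoc bx_comm)
  finally have F: "x = foldl bxor (bxor (band c1' c2') bones) (map2 bscale (or_generators c1 G1 c2 G2) \<beta>)"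
    by (simp only: foldl_bx)
  show "x \<in> logical_zonotope (bxor (band c1' c2') bones) (or_generators c1 G1 c2 G2)"
    unfolding logical_zonotope_def using \<beta>(1) F by blast
next
  fix x assume "x \<in> {bnot (bor z1 z2) | z1 z2. z1 \<in> logical_zonotope c1 G1 \<and> z2 \<in> logical_zonotope c2 G2}"
  then obtain z1 z2 where z: "z1 \<in> logical_zonotope c1 G1" "z2 \<in> logical_zonotope c2 G2" "x = bnot (bor z1 z2)"
    by blast
  obtain \<beta> where \<beta>: "length \<beta> = length (or_generators c1 G1 c2 G2)"
    "band (bnot z1) (bnot z2) = bxor (band c1' c2') (S (map2 bscale (or_generators c1 G1 c2 G2) \<beta>))"
    using core[OF z(1,2)] unfolding c1'_def c2'_def by blast
  have "x = band (bnot z1) (bnot z2)"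
    using z(3) by (auto simp: vec_eq_iff bor_def band_def bnot_def)
  then have F: "x = foldl bxor (band c1' c2') (map2 bscale (or_generators c1 G1 c2 G2) \<beta>)"
    using \<beta>(2) by (simp only: foldl_bx)
  show "x \<in> logical_zonotope (band c1' c2') (or_generators c1 G1 c2 G2)"
    unfolding logical_zonotope_def using \<beta>(1) F by blast
qed

end
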